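(* Let $\mathcal{H}$ be a Loynes $\mathcal{Z}$-space (pseudo-Hilbert space) over an admissible space $\mathcal{Z}$, and let $P,Q\in\mathcal{B}^*(\mathcal{H})$ be gramian self-adjoint projections on $\mathcal{H}$ such that $$\|P-Q\|<1,$$ where $\|\cdot\|$ is the operator norm on $\mathcal{B}(\mathcal{H})$ defined below. Then there exists a partial gramian isometry $T\in\mathcal{PI}(\mathcal{H})$ such that $P=T^*T$ and $Q=TT^*$.
   Context: An admissible space $\mathcal{Z}$ (in the sense of Loynes) is a complete Hausdorff locally convex topological vector space equipped with an involution $z\mapsto z^*$ and a closed convex cone $\mathcal{Z}_+$ defining an order $\le$ ($z_1\le z_2$ iff $z_2-z_1\in\mathcal{Z}_+$), such that positive elements are self-adjoint, the topology has a base of neighborhoods $V$ of $0$ that are solid ($0\le z_1\le z_2$, $z_2\in V$ implies $z_1\in V$), and every monotonically decreasing sequence of positive elements converges. A Loynes $\mathcal{Z}$-space $\mathcal{H}$ is a complex vector space with a $\mathcal{Z}$-valued inner product (gramian) $[\cdot,\cdot]:\mathcal{H}\times\mathcal{H}\to\mathcal{Z}$ that is linear in the first variable, satisfies $[h,k]^*=[k,h]$, $[h,h]\ge 0$, and $[h,h]=0$ only for $h=0$, and such that $\mathcal{H}$ is complete in the topology whose neighborhoods of $0$ are $\{h:[h,h]\in V\}$ for $V$ neighborhoods of $0$ in $\mathcal{Z}$. A linear operator $T:\mathcal{H}\to\mathcal{H}$ is bounded if there is $M>0$ with $[Th,Th]\le M^2[h,h]$ for all $h\in\mathcal{H}$;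 the set of such operators is $\mathcal{B}(\mathcal{H})$, normed by $\|T\|=\inf\{M: [Th,Th]\le M^2[h,h]\ \forall h\}$. The adjoint $T^*$ of $T$ (if it exists) is the linear operator with $[Th,k]=[h,T^*k]$ for all $h,k$; $\mathcal{B}^*(\mathcal{H})$ denotes the adjointable elements of $\mathcal{B}(\mathcal{H})$ (a $C^*$-algebra). A gramian self-adjoint projection is $P\in\mathcal{B}^*(\mathcal{H})$ with $P=P^*=P^2$. A subspace $\mathcal{M}$ is accessible if it has a gramian orthogonal complement $\mathcal{M}^\perp=\{h:[h,m]=0\ \forall m\in\mathcal{M}\}$ with $\mathcal{H}=\mathcal{M}\oplus\mathcal{M}^\perp$. A linear operator $T:\mathcal{H}\to\mathcal{H}$ is a partial gramian isometry if its kernel $\mathcal{N}(T)$ and range $\mathcal{R}(T)$ are accessible subspaces and $T$ restricted to $\mathcal{N}(T)^\perp$ is a gramian-preserving (gramian unitary) map onto $\mathcal{R}(T)$, i.e. $[Th,Tk]=[h,k]$ for $h,k\in\mathcal{N}(T)^\perp$. The set of these is denoted $\mathcal{PI}(\mathcal{H})$; its elements lie in $\mathcal{B}^*(\mathcal{H})$. *)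

theory Defs
  imports "HOL-Analysis.Analysis"
begin

definition nhds0_set :: "'z::{topological_space,zero} set \<Rightarrow> bool" where
  "nhds0_set V \<longleftrightarrow> (\<exists>W. open W \<and> 0 \<in> W \<and> W \<subseteq> V)"

definition solid_set :: "'z::ab_group_add set \<Rightarrow> 'z set \<Rightarrow> bool" where
  "solid_set Zp V \<longleftrightarrow> (\<forall>z1 z2. z1 \<in> Zp \<and> z2 - z1 \<in> Zp \<and> z2 \<in> V \<longrightarrow> z1 \<in> V)"

definition convex_wrt :: "(complex \<Rightarrow> 'z::ab_group_add \<Rightarrow> 'z) \<Rightarrow> 'z set \<Rightarrow> bool" where
  "convex_wrt smul V \<longleftrightarrow>
     (\<forall>x\<in>V. \<forall>y\<in>V. \<forall>t::real. 0 \<le> t \<and> t \<le> 1 \<longrightarrow>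
        smul (complex_of_real t) x + smul (complex_of_real (1 - t)) y \<in> V)"

locale admissible_space = vector_space smul
  for smul :: "complex \<Rightarrow> 'z::{t2_space,ab_group_add} \<Rightarrow> 'z" +
  fixes inv :: "'z \<Rightarrow> 'z" and Zp :: "'z set"
  assumes add_cont: "continuous_on UNIV (\<lambda>p::'z\<times>'z. fst p + snd p)"
    and smul_cont: "continuous_on UNIV (\<lambda>p::complex\<times>'z. smul (fst p) (snd p))"
    and complete: "\<And>F::'z filter. F \<noteq> bot \<Longrightarrow>
        (\<forall>U. open U \<and> 0 \<in> U \<longrightarrow> eventually (\<lambda>p. fst p - snd p \<in> U) (F \<times>\<^sub>F F)) \<Longrightarrow>
        \<exists>z. F \<le> nhds z"
    and locally_convex: "\<And>U. open U \<Longrightarrow> 0 \<in> U \<Longrightarrow>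
        \<exists>V. nhds0_set V \<and> V \<subseteq> U \<and> convex_wrt smul V"
    and inv_inv: "\<And>z. inv (inv z) = z"
    and inv_add: "\<And>z w. inv (z + w) = inv z + inv w"
    and inv_smul: "\<And>a z. inv (smul a z) = smul (cnj a) (inv z)"
    and Zp_closed: "closed Zp"
    and Zp_zero: "0 \<in> Zp"
    and Zp_add: "\<And>z w. z \<in> Zp \<Longrightarrow> w \<in> Zp \<Longrightarrow> z + w \<in> Zp"
    and Zp_smul: "\<And>z r. z \<in> Zp \<Longrightarrow> 0 \<le> r \<Longrightarrow> smul (complex_of_real r) z \<in> Zp"
    and Zp_pointed: "\<And>z. z \<in> Zp \<Longrightarrow> - z \<in> Zp \<Longrightarrow> z = 0"
    and pos_selfadjoint: "\<And>z. z \<in> Zp \<Longrightarrow> inv z = z"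
    and solid_base: "\<And>U. open U \<Longrightarrow> 0 \<in> U \<Longrightarrow>
        \<exists>V. nhds0_set V \<and> V \<subseteq> U \<and> solid_set Zp V"
    and decreasing_converges: "\<And>f::nat \<Rightarrow> 'z. (\<forall>n. f n \<in> Zp) \<Longrightarrow>
        (\<forall>n. f n - f (Suc n) \<in> Zp) \<Longrightarrow> \<exists>z. f \<longlonglongrightarrow> z"

locale loynes_space = admissible_space smulZ invZ Zp + H: vector_space smulH
  for smulZ :: "complex \<Rightarrow> 'z::{t2_space,ab_group_add} \<Rightarrow> 'z"
  and invZ :: "'z \<Rightarrow> 'z" and Zp :: "'z set"
  and smulH :: "complex \<Rightarrow> 'h::ab_group_add \<Rightarrow> 'h" +
  fixes gram :: "'h \<Rightarrow> 'h \<Rightarrow> 'z"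
  assumes gram_add: "\<And>x y z. gram (x + y) z = gram x z + gram y z"
    and gram_smul: "\<And>a x y. gram (smulH a x) y = smulZ a (gram x y)"
    and gram_sym: "\<And>x y. invZ (gram x y) = gram y x"
    and gram_pos: "\<And>x. gram x x \<in> Zp"
    and gram_definite: "\<And>x. gram x x = 0 \<Longrightarrow> x = 0"
    and gram_complete: "\<And>F::'h filter. F \<noteq> bot \<Longrightarrow>
        (\<forall>V. nhds0_set V \<longrightarrow>
           eventually (\<lambda>p. gram (fst p - snd p) (fst p - snd p) \<in> V) (F \<times>\<^sub>F F)) \<Longrightarrow>
        \<exists>h. \<forall>V. nhds0_set V \<longrightarrow> eventually (\<lambda>x. gram (x - h) (x - h) \<in> V) F"

definition bounded_by ::
  "(complex \<Rightarrow> 'z::ab_group_add \<Rightarrow> 'z) \<Rightarrow> 'z set \<Rightarrow> ('h \<Rightarrow> 'h \<Rightarrow> 'z) \<Rightarrow> ('h \<Rightarrow> 'h) \<Rightarrow> real \<Rightarrow> bool" where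
  "bounded_by smulZ Zp gram T M \<longleftrightarrow>
     M > 0 \<and> (\<forall>h. smulZ (complex_of_real (M ^ 2)) (gram h h) - gram (T h) (T h) \<in> Zp)"

definition Bops ::
  "(complex \<Rightarrow> 'z::ab_group_add \<Rightarrow> 'z) \<Rightarrow> 'z set \<Rightarrow> (complex \<Rightarrow> 'h::ab_group_add \<Rightarrow> 'h) \<Rightarrow>
   ('h \<Rightarrow> 'h \<Rightarrow> 'z) \<Rightarrow> ('h \<Rightarrow> 'h) set" where
  "Bops smulZ Zp smulH gram =
     {T. Vector_Spaces.linear smulH smulH T \<and> (\<exists>M. bounded_by smulZ Zp gram T M)}"

definition op_norm ::
  "(complex \<Rightarrow> 'z::ab_group_add \<Rightarrow> 'z) \<Rightarrow> 'z set \<Rightarrow> ('h \<Rightarrow> 'h \<Rightarrow> 'z) \<Rightarrow> ('h \<Rightarrow> 'h) \<Rightarrow> real" where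
  "op_norm smulZ Zp gram T = Inf {M. bounded_by smulZ Zp gram T M}"

definition is_adjoint ::
  "(complex \<Rightarrow> 'h::ab_group_add \<Rightarrow> 'h) \<Rightarrow> ('h \<Rightarrow> 'h \<Rightarrow> 'z) \<Rightarrow> ('h \<Rightarrow> 'h) \<Rightarrow> ('h \<Rightarrow> 'h) \<Rightarrow> bool" where
  "is_adjoint smulH gram T S \<longleftrightarrow>
     Vector_Spaces.linear smulH smulH S \<and> (\<forall>h k. gram (T h) k = gram h (S k))"

definition adjoint ::
  "(complex \<Rightarrow> 'h::ab_group_add \<Rightarrow> 'h) \<Rightarrow> ('h \<Rightarrow> 'h \<Rightarrow> 'z) \<Rightarrow> ('h \<Rightarrow> 'h) \<Rightarrow> ('h \<Rightarrow> 'h)" where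
  "adjoint smulH gram T = (SOME S. is_adjoint smulH gram T S)"

definition Bstar ::
  "(complex \<Rightarrow> 'z::ab_group_add \<Rightarrow> 'z) \<Rightarrow> 'z set \<Rightarrow> (complex \<Rightarrow> 'h::ab_group_add \<Rightarrow> 'h) \<Rightarrow>
   ('h \<Rightarrow> 'h \<Rightarrow> 'z) \<Rightarrow> ('h \<Rightarrow> 'h) set" where
  "Bstar smulZ Zp smulH gram =
     {T \<in> Bops smulZ Zp smulH gram. \<exists>S. is_adjoint smulH gram T S}"

definition gram_sa_projection ::
  "(complex \<Rightarrow> 'z::ab_group_add \<Rightarrow> 'z) \<Rightarrow> 'z set \<Rightarrow> (complex \<Rightarrow> 'h::ab_group_add \<Rightarrow> 'h) \<Rightarrow>
   ('h \<Rightarrow> 'h \<Rightarrow> 'z) \<Rightarrow> ('h \<Rightarrow> 'h) \<Rightarrow> bool" where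
  "gram_sa_projection smulZ Zp smulH gram P \<longleftrightarrow>
     P \<in> Bstar smulZ Zp smulH gram \<and> adjoint smulH gram P = P \<and> P \<circ> P = P"

definition gram_orth :: "('h \<Rightarrow> 'h \<Rightarrow> 'z::zero) \<Rightarrow> 'h set \<Rightarrow> 'h set" where
  "gram_orth gram M = {h. \<forall>m\<in>M. gram h m = 0}"

definition accessible ::
  "(complex \<Rightarrow> 'h::ab_group_add \<Rightarrow> 'h) \<Rightarrow> ('h \<Rightarrow> 'h \<Rightarrow> 'z::zero) \<Rightarrow> 'h set \<Rightarrow> bool" where
  "accessible smulH gram M \<longleftrightarrow>
     module.subspace smulH M \<and> (\<forall>h. \<exists>m\<in>M. \<exists>n\<in>gram_orth gram M. h = m + n)"

definition PI ::
  "(complex \<Rightarrow> 'h::ab_group_add \<Rightarrow> 'h) \<Rightarrow> ('h \<Rightarrow> 'h \<Rightarrow> 'z::zero) \<Rightarrow> ('h \<Rightarrow> 'h) set" where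
  "PI smulH gram =
     {T. Vector_Spaces.linear smulH smulH T
       \<and> accessible smulH gram {h. T h = 0}
       \<and> accessible smulH gram (range T)
       \<and> (\<forall>h\<in>gram_orth gram {h. T h = 0}. \<forall>k\<in>gram_orth gram {h. T h = 0}.
             gram (T h) (T k) = gram h k)}"

end

theory Submission
  imports Defs "HOL-Computational_Algebra.Polynomial"
begin


lemma cont2_open:
  assumes "continuous_on UNIV (\<lambda>p. f (fst p) (snd p))" "open U" "f a b \<in> U"
  shows "\<exists>A B. open A \<and> open B \<and> a \<in> A \<and> b \<in> B \<and> (\<forall>x\<in>A. \<forall>y\<in>B. f x y \<in> U)"
proof -
  let ?S = "(\<lambda>p. f (fst p) (snd p)) -` U"
  have o: "open ?S" using open_vimage[OF assms(2,1)] .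
  have m: "(a,b) \<in> ?S" using assms(3) by simp
  obtain A B where "open A" "open B" "(a,b) \<in> A \<times> B" "A \<times> B \<subseteq> ?S"
    using open_prod_elim[OF o m] by metis
  then show ?thesis
    apply (intro exI[of _ A] exI[of _ B])
    apply (auto simp: subset_eq)
    done
qed

lemma cont2_tendsto:
  assumes "continuous_on UNIV (\<lambda>p. f (fst p) (snd p))" "(u \<longlongrightarrow> a) F" "(v \<longlongrightarrow> b) F"
  shows "((\<lambda>x. f (u x) (v x)) \<longlongrightarrow> f a b) F"
proof -
  have "((\<lambda>x. (u x, v x)) \<longlongrightarrow> (a, b)) F" using assms(2,3) by (rule tendsto_Pair)
  from continuous_on_tendsto_compose[OF assms(1) this] show ?thesis by (simp add: o_def)
qed

context loynes_space
begin

abbreviation rs :: "real \<Rightarrow> 'z \<Rightarrow> 'z" where "rs r z \<equiv> smulZ (complex_of_real r) z"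
definition le :: "'z \<Rightarrow> 'z \<Rightarrow> bool" where "le z w \<longleftrightarrow> w - z \<in> Zp"

lemma rs_rs: "rs r (rs s z) = rs (r * s) z" by (simp only: scale_scale of_real_mult)
lemma rs_one: "rs 1 z = z" by simp
lemma le_refl: "le z z" unfolding le_def using Zp_zero by (simp only: diff_self)
lemma le_trans[trans]: "le a b \<Longrightarrow> le b c \<Longrightarrow> le a c"
proof -
  assume "le a b" "le b c"
  have "c - a = (c - b) + (b - a)" by simp
  then show ?thesis using \<open>le a b\<close> \<open>le b c\<close> Zp_add[of "c - b" "b - a"] unfolding le_def by (simp only:)
qed
lemma le_add: "le a b \<Longrightarrow> le c d \<Longrightarrow> le (a + c) (b + d)"
proof -
  assume "le a b" "le c d"
  have "(b + d) - (a + c) = (b - a) + (d - c)" by simp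
  then show ?thesis using \<open>le a b\<close> \<open>le c d\<close> Zp_add unfolding le_def by metis
qed
lemma le_scale: "le a b \<Longrightarrow> 0 \<le> r \<Longrightarrow> le (rs r a) (rs r b)"
  unfolding le_def using Zp_smul[of "b - a" r] by (simp add: scale_right_diff_distrib)
lemma le_scale2: "z \<in> Zp \<Longrightarrow> r \<le> s \<Longrightarrow> le (rs r z) (rs s z)"
  unfolding le_def using Zp_smul[of z "s - r"] by (simp add: scale_left_diff_distrib[symmetric])
lemma le_0: "le 0 z \<longleftrightarrow> z \<in> Zp" by (simp add: le_def)
lemma le_antisym: "le a b \<Longrightarrow> le b a \<Longrightarrow> a = b"
proof -
  assume "le a b" "le b a"
  then have "b - a \<in> Zp" "- (b - a) \<in> Zp" unfolding le_def by (simp_all only: minus_diff_eq)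
  then have "b - a = 0" by (rule Zp_pointed)
  then have "b = a" by (simp only: right_minus_eq)
  then show "a = b" by (rule sym)
qed

lemma tendsto_addZ: fixes u v :: "'b \<Rightarrow> 'z" shows "(u \<longlongrightarrow> a) F \<Longrightarrow> (v \<longlongrightarrow> b) F \<Longrightarrow> ((\<lambda>x. u x + v x) \<longlongrightarrow> a + b) F"
  by (rule cont2_tendsto[where f="(+)", OF add_cont])
lemma tendsto_smulZ: fixes v :: "'b \<Rightarrow> 'z" shows "(u \<longlongrightarrow> a) F \<Longrightarrow> (v \<longlongrightarrow> b) F \<Longrightarrow> ((\<lambda>x. smulZ (u x) (v x)) \<longlongrightarrow> smulZ a b) F"
  by (rule cont2_tendsto[where f=smulZ, OF smul_cont])
lemma tendsto_smulZc: fixes v :: "'b \<Rightarrow> 'z" shows "(v \<longlongrightarrow> b) F \<Longrightarrow> ((\<lambda>x. smulZ c (v x)) \<longlongrightarrow> smulZ c b) F"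
  using tendsto_smulZ[OF tendsto_const] .
lemma tendsto_diffZ: fixes u v :: "'b \<Rightarrow> 'z" shows "(u \<longlongrightarrow> a) F \<Longrightarrow> (v \<longlongrightarrow> b) F \<Longrightarrow> ((\<lambda>x. u x - v x) \<longlongrightarrow> a - b) F"
proof -
  assume "(u \<longlongrightarrow> a) F" "(v \<longlongrightarrow> b) F"
  then have "((\<lambda>x. u x + smulZ (-1) (v x)) \<longlongrightarrow> a + smulZ (-1) b) F"
    by (intro tendsto_addZ tendsto_smulZc)
  then show ?thesis by simp
qed

lemma squeeze:
  assumes "\<And>x. le 0 (z x)" "\<And>x. le (z x) (w x)" "(w \<longlongrightarrow> 0) F"
  shows "(z \<longlongrightarrow> 0) F"
proof (rule topological_tendstoI)
  fix U :: "'z set" assume U: "open U" "0 \<in> U"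
  from solid_base[OF U] obtain V where V: "nhds0_set V" "V \<subseteq> U" "solid_set Zp V" by blast
  from V(1) obtain W where W: "open W" "0 \<in> W" "W \<subseteq> V" unfolding nhds0_set_def by blast
  from topological_tendstoD[OF assms(3) W(1,2)] have "eventually (\<lambda>x. w x \<in> W) F" .
  then show "eventually (\<lambda>x. z x \<in> U) F"
  proof (rule eventually_mono)
    fix x assume "w x \<in> W"
    then have "w x \<in> V" using W by auto
    then have "z x \<in> V" using V(3) assms(1,2)[of x] unfolding solid_set_def le_def by auto
    then show "z x \<in> U" using V by auto
  qed
qed

lemma invZ_zero[simp]: "invZ 0 = 0" using inv_add[of 0 0] by simp
lemma invZ_minus: "invZ (- z) = - invZ z" proof -
  have "invZ z + invZ (- z) = 0" using inv_add[of z "-z"] by simp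
  then show ?thesis by (simp add: add_eq_0_iff)
qed
lemma invZ_diff: "invZ (z - w) = invZ z - invZ w" by (simp only: inv_add invZ_minus diff_conv_add_uminus)

lemma gram_add2: "gram x (y + z) = gram x y + gram x z"
  by (metis gram_sym gram_add inv_add)
lemma gram_smul2: "gram x (smulH c y) = smulZ (cnj c) (gram x y)"
  by (metis gram_sym gram_smul inv_smul)
lemma gram_zero1[simp]: "gram 0 y = 0" using gram_add[of 0 0 y] by simp
lemma gram_zero2[simp]: "gram x 0 = 0" using gram_add2[of x 0 0] by simp
lemma gram_minus1: "gram (-x) y = - gram x y" proof -
  have "gram x y + gram (-x) y = 0" using gram_add[of x "-x" y] by simp
  then show ?thesis by (simp add: add_eq_0_iff)
qed
lemma gram_minus2: "gram x (-y) = - gram x y" proof -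
  have "gram x y + gram x (-y) = 0" using gram_add2[of x y "-y"] by simp
  then show ?thesis by (simp add: add_eq_0_iff)
qed
lemma gram_diff1: "gram (x - y) z = gram x z - gram y z" by (simp only: diff_conv_add_uminus gram_add gram_minus1)
lemma gram_diff2: "gram x (y - z) = gram x y - gram x z" by (simp only: diff_conv_add_uminus gram_add2 gram_minus2)

lemma gram_rs1: "gram (smulH (complex_of_real r) x) y = rs r (gram x y)" by (simp add: gram_smul)
lemma gram_rs2: "gram x (smulH (complex_of_real r) y) = rs r (gram x y)" by (simp add: gram_smul2)

lemma gram_expand: "gram (x + y) (x + y) = gram x x + gram y y + (gram x y + gram y x)"
  by (simp add: gram_add gram_add2 algebra_simps)

lemma gram_smul_smul: "gram (smulH c x) (smulH c x) = rs ((cmod c)\<^sup>2) (gram x x)"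
proof -
  have "gram (smulH c x) (smulH c x) = smulZ (c * cnj c) (gram x x)" by (simp add: gram_smul gram_smul2)
  also have "c * cnj c = complex_of_real ((cmod c)\<^sup>2)" by (rule complex_norm_square[symmetric])
  finally show ?thesis .
qed

lemma gram_eq0: "gram x x = 0 \<longleftrightarrow> x = 0" using gram_definite by auto

lemma gram_triangle:
  assumes "le (gram x x) (rs (a\<^sup>2) w)" "le (gram y y) (rs (b\<^sup>2) w)" "0 \<le> a" "0 \<le> b" "w \<in> Zp"
  shows "le (gram (x + y) (x + y)) (rs ((a + b)\<^sup>2) w)"
proof (cases "a = 0 \<or> b = 0")
  case True
  then show ?thesis
  proof
    assume "a = 0"
    then have "le (gram x x) 0" using assms(1) by simp
    then have "gram x x = 0" using le_antisym le_0 gram_pos by blast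
    then show ?thesis using assms(2) \<open>a = 0\<close> by (simp add: gram_eq0)
  next
    assume "b = 0"
    then have "le (gram y y) 0" using assms(2) by simp
    then have "gram y y = 0" using le_antisym le_0 gram_pos by blast
    then show ?thesis using assms(1) \<open>b = 0\<close> by (simp add: gram_eq0)
  qed
next
  case False
  then have ab: "a > 0" "b > 0" using assms by auto
  let ?c = "gram x y + gram y x"
  have "gram (smulH (complex_of_real b) x - smulH (complex_of_real a) y) (smulH (complex_of_real b) x - smulH (complex_of_real a) y)
    = rs (b\<^sup>2) (gram x x) + rs (a\<^sup>2) (gram y y) - rs (a*b) ?c"
    by (simp add: gram_diff1 gram_diff2 gram_rs1 gram_rs2 algebra_simps power2_eq_square scale_right_distrib flip: of_real_mult)
  then have c1: "le (rs (a*b) ?c) (rs (b\<^sup>2) (gram x x) + rs (a\<^sup>2) (gram y y))"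
    using gram_pos unfolding le_def by metis
  have "rs (a*b) (gram (x+y) (x+y)) = rs (a*b) (gram x x) + rs (a*b) (gram y y) + rs (a*b) ?c"
    by (simp add: gram_expand scale_right_distrib)
  then have "le (rs (a*b) (gram (x+y) (x+y))) (rs (a*b) (gram x x) + rs (a*b) (gram y y) + (rs (b\<^sup>2) (gram x x) + rs (a\<^sup>2) (gram y y)))"
    using le_add[OF le_refl c1] by simp
  also have "rs (a*b) (gram x x) + rs (a*b) (gram y y) + (rs (b\<^sup>2) (gram x x) + rs (a\<^sup>2) (gram y y))
     = rs (a*b + b\<^sup>2) (gram x x) + rs (a*b + a\<^sup>2) (gram y y)"
    by (simp add: scale_left_distrib)
  also have "le \<dots> (rs (a*b + b\<^sup>2) (rs (a\<^sup>2) w) + rs (a*b + a\<^sup>2) (rs (b\<^sup>2) w))"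
    using ab by (intro le_add le_scale assms) auto
  also have "rs (a*b + b\<^sup>2) (rs (a\<^sup>2) w) + rs (a*b + a\<^sup>2) (rs (b\<^sup>2) w) = rs (a*b) (rs ((a+b)\<^sup>2) w)"
  proof -
    have e: "(a*b+b\<^sup>2)*a\<^sup>2 + (a*b+a\<^sup>2)*b\<^sup>2 = a*b*(a+b)\<^sup>2" by (simp add: power2_eq_square algebra_simps)
    have "rs (a*b + b\<^sup>2) (rs (a\<^sup>2) w) + rs (a*b + a\<^sup>2) (rs (b\<^sup>2) w) = rs ((a*b+b\<^sup>2)*a\<^sup>2 + (a*b+a\<^sup>2)*b\<^sup>2) w"
      by (simp only: scale_scale of_real_mult of_real_add scale_left_distrib)
    also have "\<dots> = rs (a*b) (rs ((a+b)\<^sup>2) w)" by (simp only: e scale_scale of_real_mult)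
    finally show ?thesis .
  qed
  finally have "le (rs (a*b) (gram (x+y) (x+y))) (rs (a*b) (rs ((a+b)\<^sup>2) w))" .
  then have "le (rs (1/(a*b)) (rs (a*b) (gram (x+y) (x+y)))) (rs (1/(a*b)) (rs (a*b) (rs ((a+b)\<^sup>2) w)))"
    by (rule le_scale) (use ab in simp)
  then have "le (rs (1/(a*b) * (a*b)) (gram (x+y) (x+y))) (rs (1/(a*b) * (a*b)) (rs ((a+b)\<^sup>2) w))"
    by (simp only: rs_rs mult.assoc)
  moreover have "1/(a*b) * (a*b) = 1" using ab by simp
  ultimately show ?thesis by (simp only: rs_one)
qed

end



context loynes_space
begin

lemma tendsto0_iff: "((f::'b \<Rightarrow> 'z) \<longlongrightarrow> 0) F \<longleftrightarrow> (\<forall>V. nhds0_set V \<longrightarrow> eventually (\<lambda>x. f x \<in> V) F)"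
proof
  assume L: "(f \<longlongrightarrow> 0) F"
  show "\<forall>V. nhds0_set V \<longrightarrow> eventually (\<lambda>x. f x \<in> V) F"
  proof (intro allI impI)
    fix V :: "'z set" assume "nhds0_set V"
    then obtain W where W: "open W" "0 \<in> W" "W \<subseteq> V" unfolding nhds0_set_def by blast
    from topological_tendstoD[OF L W(1,2)] show "eventually (\<lambda>x. f x \<in> V) F"
      by (rule eventually_mono) (use W in auto)
  qed
next
  assume R: "\<forall>V. nhds0_set V \<longrightarrow> eventually (\<lambda>x. f x \<in> V) F"
  show "(f \<longlongrightarrow> 0) F"
  proof (rule topological_tendstoI)
    fix U :: "'z set" assume "open U" "0 \<in> U"
    then have "nhds0_set U" unfolding nhds0_set_def by blast
    then show "eventually (\<lambda>x. f x \<in> U) F" using R by blast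
  qed
qed

definition hconv :: "(nat \<Rightarrow> 'h) \<Rightarrow> 'h \<Rightarrow> bool" where
  "hconv x a \<longleftrightarrow> (\<lambda>n. gram (x n - a) (x n - a)) \<longlonglongrightarrow> 0"

lemma hcomplete:
  assumes C: "\<And>V. nhds0_set V \<Longrightarrow> \<exists>N. \<forall>m\<ge>N. \<forall>n\<ge>N. gram (x m - x n) (x m - x n) \<in> V"
  shows "\<exists>a. hconv x a"
proof -
  let ?F = "filtermap x sequentially"
  have nb: "?F \<noteq> bot" by (simp add: filtermap_bot_iff)
  have "\<forall>V. nhds0_set V \<longrightarrow> eventually (\<lambda>p. gram (fst p - snd p) (fst p - snd p) \<in> V) (?F \<times>\<^sub>F ?F)"
  proof (intro allI impI)
    fix V :: "'z set" assume "nhds0_set V"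
    from C[OF this] obtain N where N: "\<forall>m\<ge>N. \<forall>n\<ge>N. gram (x m - x n) (x m - x n) \<in> V" by blast
    let ?P = "\<lambda>y. \<exists>n\<ge>N. y = x n"
    have ev: "eventually ?P ?F" unfolding eventually_filtermap eventually_sequentially by blast
    show "eventually (\<lambda>p. gram (fst p - snd p) (fst p - snd p) \<in> V) (?F \<times>\<^sub>F ?F)"
      unfolding eventually_prod_filter
      by (rule exI[of _ ?P], rule exI[of _ ?P]) (use ev N in auto)
  qed
  from gram_complete[OF nb this] obtain h where
    h: "\<forall>V. nhds0_set V \<longrightarrow> eventually (\<lambda>y. gram (y - h) (y - h) \<in> V) ?F" by blast
  have "(\<lambda>n. gram (x n - h) (x n - h)) \<longlonglongrightarrow> 0"
    unfolding tendsto0_iff using h by (simp add: eventually_filtermap)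
  then show ?thesis unfolding hconv_def by blast
qed

lemma gram_diff_expand: "gram (u - v) (u - v) = gram u u + gram v v - (gram u v + gram v u)"
  by (simp add: gram_diff1 gram_diff2 algebra_simps)

lemma gram_le2: "le (gram (u + v) (u + v)) (rs 2 (gram u u) + rs 2 (gram v v))"
proof -
  have "gram (u + v) (u + v) + gram (u - v) (u - v) = rs 2 (gram u u) + rs 2 (gram v v)"
    by (simp only: gram_expand gram_diff_expand) (simp add: scale_left_distrib[of 1 1, simplified] algebra_simps)
  then have "(rs 2 (gram u u) + rs 2 (gram v v)) - gram (u + v) (u + v) = gram (u - v) (u - v)"
    by (simp add: algebra_simps)
  then show ?thesis unfolding le_def using gram_pos by simp
qed

lemma gram_neg: "gram (- u) (- u) = gram u u" by (simp add: gram_minus1 gram_minus2)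

lemma squeezeH: "(\<And>n. le (gram (x n - a) (x n - a)) (w n)) \<Longrightarrow> w \<longlonglongrightarrow> 0 \<Longrightarrow> hconv x a"
  unfolding hconv_def by (rule squeeze) (auto simp: le_0 gram_pos)

lemma hconv_add:
  assumes "hconv x a" "hconv y b"
  shows "hconv (\<lambda>n. x n + y n) (a + b)"
proof (rule squeezeH)
  fix n
  have e: "x n + y n - (a + b) = (x n - a) + (y n - b)" by simp
  show "le (gram (x n + y n - (a + b)) (x n + y n - (a + b)))
      (rs 2 (gram (x n - a) (x n - a)) + rs 2 (gram (y n - b) (y n - b)))"
    unfolding e by (rule gram_le2)
next
  have "(\<lambda>n. rs 2 (gram (x n - a) (x n - a)) + rs 2 (gram (y n - b) (y n - b))) \<longlonglongrightarrow> rs 2 0 + rs 2 0"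
    using assms unfolding hconv_def by (intro tendsto_addZ tendsto_smulZc)
  then show "(\<lambda>n. rs 2 (gram (x n - a) (x n - a)) + rs 2 (gram (y n - b) (y n - b))) \<longlonglongrightarrow> 0" by simp
qed

lemma hconv_op:
  assumes B: "\<And>y. le (gram (L y) (L y)) (rs C (gram y y))" and D: "\<And>u v. L (u - v) = L u - L v"
    and "hconv x a"
  shows "hconv (\<lambda>n. L (x n)) (L a)"
proof (rule squeezeH)
  fix n show "le (gram (L (x n) - L a) (L (x n) - L a)) (rs C (gram (x n - a) (x n - a)))"
    using B[of "x n - a"] D by simp
next
  show "(\<lambda>n. rs C (gram (x n - a) (x n - a))) \<longlonglongrightarrow> 0"
    using tendsto_smulZc[OF assms(3)[unfolded hconv_def]] by simp
qed

lemma hconv_neg: "hconv x a \<Longrightarrow> hconv (\<lambda>n. - x n) (- a)"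
  unfolding hconv_def by (simp add: gram_neg[of "x _ - a", symmetric] algebra_simps)

lemma hconv_diff: "hconv x a \<Longrightarrow> hconv y b \<Longrightarrow> hconv (\<lambda>n. x n - y n) (a - b)"
  using hconv_add[OF _ hconv_neg, of x a y b] by simp

lemma hconv_const: "hconv (\<lambda>n. a) a" unfolding hconv_def by simp

lemma hconv_unique:
  assumes "hconv x a" "hconv x b" shows "a = b"
proof -
  have "(\<lambda>n. gram (a - b) (a - b)) \<longlonglongrightarrow> 0"
  proof (rule squeeze)
    fix n
    have "a - b = (x n - b) + (- (x n - a))" by simp
    then show "le (gram (a - b) (a - b)) (rs 2 (gram (x n - b) (x n - b)) + rs 2 (gram (x n - a) (x n - a)))"
      using gram_le2[of "x n - b" "- (x n - a)"] by (simp only: gram_neg)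
    show "le 0 (gram (a - b) (a - b))" by (simp add: le_0 gram_pos)
  next
    have "(\<lambda>n. rs 2 (gram (x n - b) (x n - b)) + rs 2 (gram (x n - a) (x n - a))) \<longlonglongrightarrow> rs 2 0 + rs 2 0"
      using assms unfolding hconv_def by (intro tendsto_addZ tendsto_smulZc)
    then show "(\<lambda>n. rs 2 (gram (x n - b) (x n - b)) + rs 2 (gram (x n - a) (x n - a))) \<longlonglongrightarrow> 0" by simp
  qed
  then have "gram (a - b) (a - b) = 0" using LIMSEQ_unique tendsto_const by blast
  then show ?thesis using gram_eq0 by simp
qed

end



context loynes_space
begin

lemma gram_real_lin:
  "gram (smulH (complex_of_real p) u + smulH (complex_of_real q) v) (smulH (complex_of_real p) u + smulH (complex_of_real q) v)
   = rs (p\<^sup>2) (gram u u) + rs (q\<^sup>2) (gram v v) + rs (p * q) (gram u v + gram v u)"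
proof -
  have "gram (smulH (complex_of_real p) u + smulH (complex_of_real q) v) (smulH (complex_of_real p) u + smulH (complex_of_real q) v)
    = rs p (rs p (gram u u)) + rs q (rs q (gram v v)) + (rs q (rs p (gram u v)) + rs p (rs q (gram v u)))"
    by (simp only: gram_expand gram_rs1 gram_rs2)
  also have "\<dots> = rs (p\<^sup>2) (gram u u) + rs (q\<^sup>2) (gram v v) + rs (p * q) (gram u v + gram v u)"
    by (simp only: rs_rs power2_eq_square scale_right_distrib mult.commute[of q p])
  finally show ?thesis .
qed

lemma realpart_cont:
  assumes D: "(\<lambda>n. gram (d n) (d n)) \<longlonglongrightarrow> 0"
  shows "(\<lambda>n. gram (d n) k + gram k (d n)) \<longlonglongrightarrow> 0"
proof (rule topological_tendstoI)
  fix U :: "'z set" assume U: "open U" "0 \<in> U"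
  have "(0::'z) + 0 \<in> U" using U by simp
  from cont2_open[where f="(+)", OF add_cont U(1) this] obtain A1 B1 where
    A1: "open A1" "open B1" "0 \<in> A1" "0 \<in> B1" "\<forall>x\<in>A1. \<forall>y\<in>B1. x + y \<in> U" by blast
  have "smulZ (-1) 0 \<in> B1" using A1 by simp
  from cont2_open[where f=smulZ, OF smul_cont A1(2) this] obtain A2 B2 where
    A2: "open A2" "open B2" "-1 \<in> A2" "0 \<in> B2" "\<forall>c\<in>A2. \<forall>y\<in>B2. smulZ c y \<in> B1" by blast
  have "open (A1 \<inter> B2)" "0 \<in> A1 \<inter> B2" using A1 A2 by auto
  from solid_base[OF this] obtain V where V: "nhds0_set V" "V \<subseteq> A1 \<inter> B2" "solid_set Zp V" by blast
  from V(1) obtain V0 where V0: "open V0" "0 \<in> V0" "V0 \<subseteq> V" unfolding nhds0_set_def by blast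
  have "smulZ 2 0 \<in> V0" using V0 by simp
  from cont2_open[where f=smulZ, OF smul_cont V0(1) this] obtain A3 B3 where
    A3: "open A3" "open B3" "2 \<in> A3" "0 \<in> B3" "\<forall>c\<in>A3. \<forall>y\<in>B3. smulZ c y \<in> V0" by blast
  have "open (V0 \<inter> B3)" "(0::'z) + 0 \<in> V0 \<inter> B3" using V0 A3 by auto
  from cont2_open[where f="(+)", OF add_cont this] obtain A4 B4 where
    A4: "open A4" "open B4" "0 \<in> A4" "0 \<in> B4" "\<forall>x\<in>A4. \<forall>y\<in>B4. x + y \<in> V0 \<inter> B3" by blast
  have "(\<lambda>n. complex_of_real ((inverse (real (Suc n)))\<^sup>2)) \<longlonglongrightarrow> complex_of_real (0\<^sup>2)"
    by (intro tendsto_of_real tendsto_power LIMSEQ_inverse_real_of_nat)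
  then have "(\<lambda>n. rs ((inverse (real (Suc n)))\<^sup>2) (gram k k)) \<longlonglongrightarrow> smulZ (complex_of_real (0\<^sup>2)) (gram k k)"
    by (rule tendsto_smulZ[OF _ tendsto_const])
  then have "(\<lambda>n. rs ((inverse (real (Suc n)))\<^sup>2) (gram k k)) \<longlonglongrightarrow> 0" by simp
  from topological_tendstoD[OF this A4(2,4)] obtain N where
    "\<forall>n\<ge>N. rs ((inverse (real (Suc n)))\<^sup>2) (gram k k) \<in> B4" unfolding eventually_sequentially by blast
  then have N: "rs ((inverse (real (Suc N)))\<^sup>2) (gram k k) \<in> B4" by blast
  define \<alpha> where "\<alpha> = real (Suc N)"
  define \<beta> where "\<beta> = inverse (real (Suc N))"
  have ab: "\<alpha> * \<beta> = 1" unfolding \<alpha>_def \<beta>_def by simp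
  have "(\<lambda>n. rs (\<alpha>\<^sup>2) (gram (d n) (d n))) \<longlonglongrightarrow> rs (\<alpha>\<^sup>2) 0"
    by (rule tendsto_smulZc[OF D])
  then have "(\<lambda>n. rs (\<alpha>\<^sup>2) (gram (d n) (d n))) \<longlonglongrightarrow> 0" by simp
  from topological_tendstoD[OF this A4(1,3)]
  show "eventually (\<lambda>n. gram (d n) k + gram k (d n) \<in> U) sequentially"
  proof (rule eventually_mono)
    fix n assume n: "rs (\<alpha>\<^sup>2) (gram (d n) (d n)) \<in> A4"
    define u where "u = rs (\<alpha>\<^sup>2) (gram (d n) (d n)) + rs (\<beta>\<^sup>2) (gram k k)"
    define b where "b = gram (d n) k + gram k (d n)"
    have uV1: "u \<in> V0 \<inter> B3" unfolding u_def using A4(5) n N \<beta>_def by blast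
    then have uV: "u \<in> V" using V0 by auto
    have u2: "smulZ 2 u \<in> V" using A3(5) A3(3) uV1 V0 by blast
    have p1: "u + b \<in> Zp"
    proof -
      have "gram (smulH (complex_of_real \<alpha>) (d n) + smulH (complex_of_real \<beta>) k) (smulH (complex_of_real \<alpha>) (d n) + smulH (complex_of_real \<beta>) k) = u + b"
        unfolding gram_real_lin u_def b_def using ab by simp
      then show ?thesis using gram_pos by metis
    qed
    have p2: "u - b \<in> Zp"
    proof -
      have "gram (smulH (complex_of_real \<alpha>) (d n) + smulH (complex_of_real (-\<beta>)) k) (smulH (complex_of_real \<alpha>) (d n) + smulH (complex_of_real (-\<beta>)) k) = u - b"
        unfolding gram_real_lin u_def b_def using ab by simp
      then show ?thesis using gram_pos by metis
    qed
    have "smulZ 2 u - (u + b) = u - b"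
    proof -
      have "smulZ 2 u = smulZ (1 + 1) u" by simp
      also have "\<dots> = u + u" by (simp only: scale_left_distrib scale_one)
      finally show ?thesis by simp
    qed
    then have "u + b \<in> V" using V(3) p1 p2 u2 unfolding solid_set_def by metis
    then have "u + b \<in> A1" using V by auto
    moreover have "smulZ (-1) u \<in> B1" using A2(5) A2(3) uV V by blast
    ultimately have "(u + b) + smulZ (-1) u \<in> U" using A1(5) by blast
    then show "gram (d n) k + gram k (d n) \<in> U" unfolding b_def by simp
  qed
qed

end



context loynes_space
begin

lemma two_scale: "smulZ 2 X = X + X"
  by (metis one_add_one scale_left_distrib scale_one)

lemma gram_cont0:
  assumes D: "(\<lambda>n. gram (d n) (d n)) \<longlonglongrightarrow> 0"
  shows "(\<lambda>n. gram (d n) k) \<longlonglongrightarrow> 0" "(\<lambda>n. gram k (d n)) \<longlonglongrightarrow> 0"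
proof -
  define X where "X n = gram (d n) k" for n
  define Y where "Y n = gram k (d n)" for n
  have b1: "(\<lambda>n. X n + Y n) \<longlonglongrightarrow> 0" unfolding X_def Y_def by (rule realpart_cont[OF D])
  have b2': "(\<lambda>n. gram (d n) (smulH \<i> k) + gram (smulH \<i> k) (d n)) \<longlonglongrightarrow> 0" by (rule realpart_cont[OF D])
  have e2: "gram (d n) (smulH \<i> k) + gram (smulH \<i> k) (d n) = smulZ (-\<i>) (X n) + smulZ \<i> (Y n)" for n
    unfolding X_def Y_def by (simp add: gram_smul gram_smul2)
  have b2: "(\<lambda>n. smulZ (-\<i>) (X n) + smulZ \<i> (Y n)) \<longlonglongrightarrow> 0" using b2' unfolding e2 .
  have i2: "smulZ \<i> (smulZ (-\<i>) (X n) + smulZ \<i> (Y n)) = X n - Y n" for n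
    by (simp add: scale_right_distrib scale_right_diff_distrib)
  have L1: "(\<lambda>n. smulZ (1/2) ((X n + Y n) + smulZ \<i> (smulZ (-\<i>) (X n) + smulZ \<i> (Y n)))) \<longlonglongrightarrow> smulZ (1/2) (0 + smulZ \<i> 0)"
    by (intro tendsto_smulZc tendsto_addZ b1 b2)
  have L2: "(\<lambda>n. smulZ (1/2) ((X n + Y n) - smulZ \<i> (smulZ (-\<i>) (X n) + smulZ \<i> (Y n)))) \<longlonglongrightarrow> smulZ (1/2) (0 - smulZ \<i> 0)"
    by (intro tendsto_smulZc tendsto_diffZ b1 b2)
  have "smulZ (1/2) ((X n + Y n) + smulZ \<i> (smulZ (-\<i>) (X n) + smulZ \<i> (Y n))) = X n" for n
  proof -
    have e: "(X n + Y n) + (X n - Y n) = smulZ 2 (X n)" by (simp add: two_scale)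
    show ?thesis unfolding i2 e by simp
  qed
  moreover have "smulZ (1/2) ((X n + Y n) - smulZ \<i> (smulZ (-\<i>) (X n) + smulZ \<i> (Y n))) = Y n" for n
  proof -
    have e: "(X n + Y n) - (X n - Y n) = smulZ 2 (Y n)" by (simp add: two_scale)
    show ?thesis unfolding i2 e by simp
  qed
  ultimately show "(\<lambda>n. gram (d n) k) \<longlonglongrightarrow> 0" "(\<lambda>n. gram k (d n)) \<longlonglongrightarrow> 0"
    using L1 L2 unfolding X_def Y_def by simp_all
qed

lemma gram_cont1: "hconv x a \<Longrightarrow> (\<lambda>n. gram (x n) k) \<longlonglongrightarrow> gram a k"
proof -
  assume "hconv x a"
  then have "(\<lambda>n. gram (x n - a) k) \<longlonglongrightarrow> 0" unfolding hconv_def by (rule gram_cont0)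
  then have "(\<lambda>n. gram (x n - a) k + gram a k) \<longlonglongrightarrow> 0 + gram a k" by (intro tendsto_addZ tendsto_const)
  then show ?thesis by (simp add: gram_diff1)
qed

lemma gram_cont2: "hconv x a \<Longrightarrow> (\<lambda>n. gram k (x n)) \<longlonglongrightarrow> gram k a"
proof -
  assume "hconv x a"
  then have "(\<lambda>n. gram k (x n - a)) \<longlonglongrightarrow> 0" unfolding hconv_def by (rule gram_cont0)
  then have "(\<lambda>n. gram k (x n - a) + gram k a) \<longlonglongrightarrow> 0 + gram k a" by (intro tendsto_addZ tendsto_const)
  then show ?thesis by (simp add: gram_diff2)
qed

end



locale opX = loynes_space smulZ invZ Zp smulH gram
  for smulZ :: "complex \<Rightarrow> 'z::{t2_space,ab_group_add} \<Rightarrow> 'z"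
  and invZ :: "'z \<Rightarrow> 'z" and Zp :: "'z set"
  and smulH :: "complex \<Rightarrow> 'h::ab_group_add \<Rightarrow> 'h"
  and gram :: "'h \<Rightarrow> 'h \<Rightarrow> 'z" +
  fixes X :: "'h \<Rightarrow> 'h" and r :: real
  assumes X_add: "X (x + y) = X x + X y"
    and X_smul: "X (smulH c x) = smulH c (X x)"
    and X_sa: "gram (X x) y = gram x (X y)"
    and X_bd: "le (gram (X x) (X x)) (rs (r\<^sup>2) (gram x x))"
    and r0: "0 \<le> r" and r1: "r < 1"
begin

lemma Xp_add: "(X ^^ i) (x + y) = (X ^^ i) x + (X ^^ i) y"
  by (induction i) (simp_all add: X_add)
lemma Xp_smul: "(X ^^ i) (smulH c x) = smulH c ((X ^^ i) x)"
  by (induction i) (simp_all add: X_smul)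
lemma X_zero: "X 0 = 0" using X_add[of 0 0] by simp
lemma Xp_zero: "(X ^^ i) 0 = 0" by (induction i) (simp_all add: X_zero)
lemma X_sum: "X (\<Sum>i\<in>A. f i) = (\<Sum>i\<in>A. X (f i))"
  by (induction A rule: infinite_finite_induct) (simp_all add: X_zero X_add)

definition peval :: "real poly \<Rightarrow> 'h \<Rightarrow> 'h" where
  "peval p h = (\<Sum>i\<le>degree p. smulH (complex_of_real (coeff p i)) ((X ^^ i) h))"

lemma peval_N: "degree p < N \<Longrightarrow> peval p h = (\<Sum>i<N. smulH (complex_of_real (coeff p i)) ((X ^^ i) h))"
  unfolding peval_def
  by (rule sum.mono_neutral_left) (auto simp: coeff_eq_0)

lemma peval_add: "peval (p + q) h = peval p h + peval q h"
proof -
  define N where "N = Suc (max (degree p) (degree q))"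
  have "degree (p + q) < N" unfolding N_def using degree_add_le[of p "max (degree p) (degree q)" q] by simp
  then show ?thesis using peval_N[of p N] peval_N[of q N] peval_N[of "p + q" N]
    unfolding N_def by (simp add: H.scale_left_distrib sum.distrib)
qed

lemma peval_smult: "peval (smult a p) h = smulH (complex_of_real a) (peval p h)"
proof -
  have "degree (smult a p) < Suc (degree p)" using degree_smult_le[of a p] by simp
  then show ?thesis using peval_N[of p "Suc (degree p)"] peval_N[of "smult a p" "Suc (degree p)"]
    by (simp add: H.scale_sum_right del: sum.lessThan_Suc)
qed

lemma peval_minus: "peval (- p) h = - peval p h"
  using peval_smult[of "-1" p h] by simp

lemma peval_diff: "peval (p - q) h = peval p h - peval q h"
  using peval_add[of p "-q" h] peval_minus[of q h] by simp

lemma peval_shift: "peval (pCons 0 p) h = X (peval p h)"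
proof -
  have d: "degree (pCons 0 p) < Suc (Suc (degree p))" using degree_pCons_le[of 0 p] by simp
  have "peval (pCons 0 p) h = (\<Sum>i<Suc (Suc (degree p)). smulH (complex_of_real (coeff (pCons 0 p) i)) ((X ^^ i) h))"
    by (rule peval_N[OF d])
  also have "\<dots> = (\<Sum>i<Suc (degree p). smulH (complex_of_real (coeff p i)) ((X ^^ Suc i) h))"
    by (subst sum.lessThan_Suc_shift) simp
  also have "\<dots> = X (peval p h)"
    using peval_N[of p "Suc (degree p)" h] by (simp add: X_sum X_smul del: sum.lessThan_Suc)
  finally show ?thesis .
qed

lemma peval_const: "peval [:a:] h = smulH (complex_of_real a) h"
  unfolding peval_def by simp

lemma peval_pCons: "peval (pCons a p) h = smulH (complex_of_real a) h + X (peval p h)"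
proof -
  have "pCons a p = [:a:] + pCons 0 p" by simp
  then show ?thesis by (simp only: peval_add peval_const peval_shift)
qed

lemma peval_zero: "peval 0 h = 0" unfolding peval_def by simp

lemma peval_one: "peval 1 h = h" using peval_const[of 1 h] by (simp add: one_pCons)

lemma peval_lin_add: "peval p (x + y) = peval p x + peval p y"
  by (induction p) (simp_all add: peval_pCons peval_zero X_add H.scale_right_distrib algebra_simps)

lemma peval_lin_smul: "peval p (smulH c x) = smulH c (peval p x)"
  by (induction p) (simp_all add: peval_pCons peval_zero X_smul H.scale_right_distrib H.scale_left_commute)

lemma peval_mult: "peval (p * q) h = peval p (peval q h)"
proof (induction p)
  case 0 then show ?case by (simp add: peval_zero)
next
  case (pCons a p)
  show ?case by (simp add: peval_add peval_smult peval_shift peval_pCons pCons.IH)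
qed

lemma peval_comm:
  assumes "\<And>x y. L (x + y) = L x + L y" "\<And>c x. L (smulH c x) = smulH c (L x)" "\<And>x. L (X x) = X (L x)"
  shows "L (peval p h) = peval p (L h)"
proof (induction p)
  case 0
  have "L 0 = 0" using assms(1)[of 0 0] by simp
  then show ?case by (simp add: peval_zero)
next
  case (pCons a p)
  show ?case by (simp add: peval_pCons assms pCons.IH)
qed

lemma peval_X: "peval p (X h) = X (peval p h)"
  by (rule peval_comm[symmetric]) (simp_all add: X_add X_smul)

lemma peval_sa: "gram (peval p h) k = gram h (peval p k)"
proof (induction p arbitrary: h k)
  case 0 then show ?case by (simp add: peval_zero)
next
  case (pCons a p)
  have "gram (peval (pCons a p) h) k = rs a (gram h k) + gram (peval p h) (X k)"
    by (simp add: peval_pCons gram_add gram_rs1 X_sa)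
  also have "\<dots> = rs a (gram h k) + gram h (peval p (X k))" by (simp add: pCons.IH)
  also have "\<dots> = gram h (peval (pCons a p) k)"
    by (simp add: peval_pCons gram_add2 gram_rs2 X_sa peval_X)
  finally show ?case .
qed

end



lemma geo_tail:
  fixes r :: real assumes "0 \<le> r" "r < 1"
  shows "(\<Sum>k\<in>{n..<m}. r^k) \<le> r^n / (1 - r)"
proof (cases "n < m")
  case False
  then have "{n..<m} = {}" by auto
  then show ?thesis using assms by simp
next
  case True
  then have e: "{n..<m} = {n..m-1}" by auto
  have "(1 - r) * (\<Sum>i=n..m-1. r^i) = r^n - r^Suc (m-1)"
    using True by (intro sum_gp_multiplied) simp
  also have "\<dots> \<le> r^n" using assms by simp
  finally have "(\<Sum>i=n..m-1. r^i) * (1 - r) \<le> r^n" by (simp add: mult.commute)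
  then show ?thesis unfolding e using assms by (simp add: pos_le_divide_eq)
qed

definition cc :: "nat \<Rightarrow> real" where "cc n = (-1)^n * ((-1/2::real) gchoose n)"

lemma cc_conv: "(\<Sum>i\<le>k. cc i * cc (k - i)) = 1"
proof -
  have pt: "cc i * cc (k - i) = (-1)^k * (((-1/2::real) gchoose i) * ((-1/2) gchoose (k - i)))" if "i \<le> k" for i
  proof -
    have "(-1::real)^i * (-1)^(k-i) = (-1)^k" using that by (simp flip: power_add)
    then show ?thesis unfolding cc_def by (metis (no_types, lifting) mult.assoc mult.left_commute)
  qed
  have "(\<Sum>i\<le>k. cc i * cc (k - i)) = (-1)^k * (\<Sum>i=0..k. ((-1/2::real) gchoose i) * ((-1/2) gchoose (k - i)))"
    unfolding sum_distrib_left atMost_atLeast0 by (rule sum.cong) (simp_all add: pt)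
  also have "\<dots> = (-1)^k * ((-1::real) gchoose k)" by (simp add: gbinomial_Vandermonde)
  also have "((-1::real) gchoose k) = (-1)^k"
  proof -
    have "((-1::real) gchoose k) = (-1)^k * ((1 + of_nat k - 1) gchoose k)" using gbinomial_minus[of 1 k] by simp
    also have "((1::real) + of_nat k - 1) gchoose k = 1"
      using binomial_gbinomial[of k k, where 'a=real] by simp
    finally show ?thesis by simp
  qed
  finally show ?thesis by (simp flip: power_add)
qed

lemma cc_nonneg: "0 \<le> cc n"
proof -
  have "cc n = (-1)^n * ((-1)^n * ((of_nat n - (-1/2) - 1) gchoose n))"
    unfolding cc_def by (subst gbinomial_negated_upper) simp
  also have "\<dots> = (of_nat n - 1/2) gchoose n" by (simp flip: power_add)
  also have "\<dots> = (\<Prod>i = 0..<n. (of_nat n - 1/2 - of_nat i) / of_nat (n - i))" by (rule gbinomial_altdef_of_nat)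
  also have "\<dots> \<ge> 0" by (rule prod_nonneg) auto
  finally show ?thesis .
qed

lemma cc_le1: "cc n \<le> 1"
proof -
  have "cc 0 * cc (n - 0) \<le> (\<Sum>i\<le>n. cc i * cc (n - i))"
    by (rule member_le_sum) (auto intro: mult_nonneg_nonneg cc_nonneg)
  moreover have "cc 0 = 1" unfolding cc_def by simp
  ultimately show ?thesis using cc_conv[of n] by simp
qed

definition sp :: "nat \<Rightarrow> real poly" where "sp N = (\<Sum>n<N. monom (cc n) n)"
definition gp :: "nat \<Rightarrow> real poly" where "gp N = (\<Sum>n<N. monom 1 n)"
definition Yp :: "real poly" where "Yp = [:1, -1:]"

lemma coeff_sp: "coeff (sp N) i = (if i < N then cc i else 0)"
  unfolding sp_def coeff_sum by (simp add: sum.delta' )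

lemma coeff_gp: "coeff (gp N) i = (if i < N then 1 else 0)"
  unfolding gp_def coeff_sum by (simp add: sum.delta')

lemma degree_sp: "degree (sp N) \<le> N"
  unfolding sp_def by (rule degree_sum_le) (auto intro: order.trans[OF degree_monom_le])

lemma degree_gp: "degree (gp N) \<le> N"
  unfolding gp_def by (rule degree_sum_le) (auto intro: order.trans[OF degree_monom_le])

lemma monom_Y: "monom 1 N * Yp = monom 1 N - monom 1 (Suc N)"
  by (rule poly_eqI) (auto simp: coeff_monom_mult Yp_def coeff_pCons' Suc_diff_le)

lemma gp_Y: "gp N * Yp = 1 - monom 1 N"
proof (induction N)
  case 0 then show ?case by (simp add: gp_def monom_0 one_pCons)
next
  case (Suc N)
  have "gp (Suc N) = gp N + monom 1 N" by (simp add: gp_def)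
  then have "gp (Suc N) * Yp = gp N * Yp + monom 1 N * Yp" by (simp add: distrib_right)
  then show ?case using Suc.IH monom_Y by simp
qed

lemma e_form: "sp N * Yp * sp N - 1 = (sp N * sp N - gp N) * Yp - monom 1 N"
proof -
  have "sp N * Yp * sp N - 1 = (sp N * sp N - gp N) * Yp + (gp N * Yp - 1)" by (simp add: algebra_simps)
  then show ?thesis by (simp add: gp_Y)
qed

lemma coeff_D: "\<bar>coeff (sp N * sp N - gp N) k\<bar> \<le> (if N \<le> k then 1 else 0)"
proof -
  have cs: "coeff (sp N * sp N) k = (\<Sum>i\<le>k. coeff (sp N) i * coeff (sp N) (k - i))" by (rule coeff_mult)
  show ?thesis
  proof (cases "k < N")
    case True
    then have "coeff (sp N * sp N) k = (\<Sum>i\<le>k. cc i * cc (k - i))" unfolding cs coeff_sp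
      by (intro sum.cong) auto
    then show ?thesis using True cc_conv[of k] by (simp add: coeff_gp)
  next
    case False
    have le: "coeff (sp N) i * coeff (sp N) (k - i) \<le> cc i * cc (k - i)" for i
      unfolding coeff_sp by (auto intro: mult_nonneg_nonneg cc_nonneg)
    have ge: "0 \<le> coeff (sp N) i * coeff (sp N) (k - i)" for i
      unfolding coeff_sp by (auto intro: mult_nonneg_nonneg cc_nonneg)
    have "(\<Sum>i\<le>k. coeff (sp N) i * coeff (sp N) (k - i)) \<le> (\<Sum>i\<le>k. cc i * cc (k - i))"
      by (rule sum_mono) (rule le)
    then have "coeff (sp N * sp N) k \<le> 1" unfolding cs using cc_conv[of k] by simp
    moreover have "0 \<le> coeff (sp N * sp N) k" unfolding cs by (rule sum_nonneg) (use ge in auto)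
    ultimately show ?thesis using False by (simp add: coeff_gp)
  qed
qed

lemma degree_D: "degree (sp N * sp N - gp N) \<le> N + N"
proof (rule degree_diff_le)
  show "degree (sp N * sp N) \<le> N + N" using degree_mult_le[of "sp N" "sp N"] degree_sp[of N] by linarith
  show "degree (gp N) \<le> N + N" using degree_gp[of N] by linarith
qed

context opX
begin

definition nu :: "real poly \<Rightarrow> real" where "nu p = (\<Sum>i\<le>degree p. \<bar>coeff p i\<bar> * r^i)"

lemma nu_N: "degree p < N \<Longrightarrow> nu p = (\<Sum>i<N. \<bar>coeff p i\<bar> * r^i)"
  unfolding nu_def by (rule sum.mono_neutral_left) (auto simp: coeff_eq_0)

lemma nu_nonneg: "0 \<le> nu p" unfolding nu_def using r0 by (intro sum_nonneg) simp

lemma nu_pCons: "nu (pCons a p) = \<bar>a\<bar> + r * nu p"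
proof -
  have d: "degree (pCons a p) < Suc (Suc (degree p))" using degree_pCons_le[of a p] by simp
  have "nu (pCons a p) = (\<Sum>i<Suc (Suc (degree p)). \<bar>coeff (pCons a p) i\<bar> * r^i)" by (rule nu_N[OF d])
  also have "\<dots> = \<bar>a\<bar> + (\<Sum>i<Suc (degree p). \<bar>coeff p i\<bar> * r^Suc i)"
    by (subst sum.lessThan_Suc_shift) simp
  also have "\<dots> = \<bar>a\<bar> + r * nu p"
    using nu_N[of p "Suc (degree p)"] by (simp add: sum_distrib_left mult_ac del: sum.lessThan_Suc)
  finally show ?thesis .
qed

lemma peval_bd: "le (gram (peval p h) (peval p h)) (rs ((nu p)\<^sup>2) (gram h h))"
proof (induction p)
  case 0 then show ?case by (simp add: peval_zero nu_def le_refl)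
next
  case (pCons a p)
  have h1: "le (gram (smulH (complex_of_real a) h) (smulH (complex_of_real a) h)) (rs (\<bar>a\<bar>\<^sup>2) (gram h h))"
    by (simp add: gram_smul_smul le_refl)
  have "le (gram (X (peval p h)) (X (peval p h))) (rs (r\<^sup>2) (gram (peval p h) (peval p h)))" by (rule X_bd)
  also have "le \<dots> (rs (r\<^sup>2) (rs ((nu p)\<^sup>2) (gram h h)))" by (rule le_scale[OF pCons.IH]) simp
  also have "rs (r\<^sup>2) (rs ((nu p)\<^sup>2) (gram h h)) = rs ((r * nu p)\<^sup>2) (gram h h)" by (simp only: rs_rs power_mult_distrib)
  finally have h2: "le (gram (X (peval p h)) (X (peval p h))) (rs ((r * nu p)\<^sup>2) (gram h h))" .
  have "le (gram (smulH (complex_of_real a) h + X (peval p h)) (smulH (complex_of_real a) h + X (peval p h)))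
     (rs ((\<bar>a\<bar> + r * nu p)\<^sup>2) (gram h h))"
    by (rule gram_triangle[OF h1 h2]) (simp_all add: r0 nu_nonneg gram_pos)
  then show ?case by (simp only: peval_pCons nu_pCons)
qed

lemma nu_bound:
  assumes "degree p < N" "\<And>i. i < N \<Longrightarrow> \<bar>coeff p i\<bar> \<le> b i"
  shows "nu p \<le> (\<Sum>i<N. b i * r^i)"
  unfolding nu_N[OF assms(1)] using assms(2) r0 by (intro sum_mono mult_right_mono) auto

lemma nu_add: "nu (p + q) \<le> nu p + nu q"
proof -
  define N where "N = Suc (max (degree p) (degree q))"
  have d: "degree (p + q) < N" unfolding N_def using degree_add_le[of p "max (degree p) (degree q)" q] by simp
  have "nu (p + q) \<le> (\<Sum>i<N. (\<bar>coeff p i\<bar> + \<bar>coeff q i\<bar>) * r^i)"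
    by (rule nu_bound[OF d]) (simp add: abs_triangle_ineq)
  also have "\<dots> = nu p + nu q" using nu_N[of p N] nu_N[of q N] unfolding N_def
    by (simp add: distrib_right sum.distrib del: sum.lessThan_Suc)
  finally show ?thesis .
qed

lemma nu_minus: "nu (- p) = nu p" unfolding nu_def by simp

lemma nu_diff: "nu (p - q) \<le> nu p + nu q"
  using nu_add[of p "-q"] nu_minus[of q] by simp

lemma nu_Y: "nu (p * Yp) \<le> (1 + r) * nu p"
proof -
  have "p * Yp = p - pCons 0 p" unfolding Yp_def by (simp add: algebra_simps)
  then have "nu (p * Yp) \<le> nu p + nu (pCons 0 p)" using nu_diff by simp
  also have "\<dots> = (1 + r) * nu p" by (simp add: nu_pCons algebra_simps)
  finally show ?thesis .
qed

lemma nu_monom: "nu (monom 1 N) = r^N"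
proof -
  have "nu (monom 1 N) = (\<Sum>i<Suc N. \<bar>coeff (monom (1::real) N) i\<bar> * r^i)"
    by (rule nu_N) (simp add: degree_monom_eq)
  also have "\<dots> = (\<Sum>i<Suc N. if N = i then r^N else 0)"
    by (rule sum.cong) auto
  also have "\<dots> = r^N" by (subst sum.delta') simp_all
  finally show ?thesis .
qed

lemma nu_sp: "nu (sp N) \<le> 1 / (1 - r)"
proof -
  have "nu (sp N) \<le> (\<Sum>i<Suc N. 1 * r^i)"
    by (rule nu_bound) (use degree_sp[of N] in \<open>auto simp: coeff_sp cc_le1 abs_of_nonneg cc_nonneg\<close>)
  also have "\<dots> = (\<Sum>i\<in>{0..<Suc N}. r^i)" by (simp add: atLeast0LessThan)
  also have "\<dots> \<le> r^0 / (1 - r)" by (rule geo_tail[OF r0 r1])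
  finally show ?thesis by simp
qed

lemma nu_sp_diff: "n \<le> m \<Longrightarrow> nu (sp m - sp n) \<le> r^n / (1 - r)"
proof -
  assume nm: "n \<le> m"
  have "nu (sp m - sp n) \<le> (\<Sum>i<Suc m. (if n \<le> i then 1 else 0) * r^i)"
  proof (rule nu_bound)
    show "degree (sp m - sp n) < Suc m" using degree_diff_le[of "sp m" m "sp n"] degree_sp[of m] degree_sp[of n] nm by simp
    fix i show "\<bar>coeff (sp m - sp n) i\<bar> \<le> (if n \<le> i then 1 else 0)"
      using nm by (auto simp: coeff_sp cc_le1 cc_nonneg)
  qed
  also have "\<dots> = (\<Sum>i\<in>{n..<Suc m}. r^i)"
    by (rule sum.mono_neutral_cong_right) auto
  also have "\<dots> \<le> r^n / (1 - r)" by (rule geo_tail[OF r0 r1])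
  finally show ?thesis .
qed

lemma nu_e: "nu (sp N * Yp * sp N - 1) \<le> (1 + r) * (r^N / (1 - r)) + r^N"
proof -
  have "nu (sp N * sp N - gp N) \<le> (\<Sum>i<Suc (N + N). (if N \<le> i then 1 else 0) * r^i)"
    by (rule nu_bound) (use degree_D[of N] coeff_D in auto)
  also have "\<dots> = (\<Sum>i\<in>{N..<Suc (N+N)}. r^i)"
    by (rule sum.mono_neutral_cong_right) auto
  also have "\<dots> \<le> r^N / (1 - r)" by (rule geo_tail[OF r0 r1])
  finally have D: "nu (sp N * sp N - gp N) \<le> r^N / (1 - r)" .
  have "nu (sp N * Yp * sp N - 1) \<le> nu ((sp N * sp N - gp N) * Yp) + nu (monom 1 N)"
    unfolding e_form by (rule nu_diff)
  also have "\<dots> \<le> (1 + r) * nu (sp N * sp N - gp N) + r^N"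
    using nu_Y[of "sp N * sp N - gp N"] nu_monom[of N] by simp
  also have "\<dots> \<le> (1 + r) * (r^N / (1 - r)) + r^N"
  proof -
    have "(1 + r) * nu (sp N * sp N - gp N) \<le> (1 + r) * (r^N / (1 - r))"
      by (rule mult_left_mono[OF D]) (use r0 in simp)
    then show ?thesis by simp
  qed
  finally show ?thesis .
qed

end



context loynes_space
begin

lemma rs_tendsto0: "(f \<longlonglongrightarrow> 0) \<Longrightarrow> (\<lambda>n. rs (f n) z) \<longlonglongrightarrow> 0"
proof -
  assume "f \<longlonglongrightarrow> 0"
  then have "(\<lambda>n. complex_of_real (f n)) \<longlonglongrightarrow> complex_of_real 0" by (rule tendsto_of_real)
  from tendsto_smulZ[OF this tendsto_const] show ?thesis by simp
qed

lemma hconv0_bd: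
  assumes "\<And>n. le (gram (u n) (u n)) (rs (f n) z)" "f \<longlonglongrightarrow> 0"
  shows "hconv u 0"
  using assms by (intro squeezeH[where w="\<lambda>n. rs (f n) z"]) (simp_all add: rs_tendsto0)

end

context opX
begin

definition S :: "nat \<Rightarrow> 'h \<Rightarrow> 'h" where "S N h = peval (sp N) h"

lemma pow0: "(\<lambda>n. r^n) \<longlonglongrightarrow> 0" using r0 r1 by (intro LIMSEQ_power_zero) simp

lemma tail0: "(\<lambda>n. r^n / (1 - r)) \<longlonglongrightarrow> 0"
  using tendsto_divide[OF pow0 tendsto_const, of "1 - r"] r1 by simp

lemma tail_tendsto: "(\<lambda>n. (r^n / (1 - r))\<^sup>2) \<longlonglongrightarrow> 0"
  using tendsto_power[OF tail0, of 2] by simp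

lemma S_diff_bd: "n \<le> m \<Longrightarrow> N \<le> n \<Longrightarrow> le (gram (S m h - S n h) (S m h - S n h)) (rs ((r^N / (1 - r))\<^sup>2) (gram h h))"
proof -
  assume nm: "n \<le> m" and Nn: "N \<le> n"
  have "S m h - S n h = peval (sp m - sp n) h" unfolding S_def by (simp add: peval_diff)
  then have "le (gram (S m h - S n h) (S m h - S n h)) (rs ((nu (sp m - sp n))\<^sup>2) (gram h h))"
    using peval_bd by simp
  also have "le \<dots> (rs ((r^N / (1 - r))\<^sup>2) (gram h h))"
  proof (rule le_scale2[OF gram_pos])
    have "nu (sp m - sp n) \<le> r^n / (1 - r)" by (rule nu_sp_diff[OF nm])
    also have "\<dots> \<le> r^N / (1 - r)" using r0 r1 Nn by (intro divide_right_mono power_decreasing) simp_all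
    finally show "(nu (sp m - sp n))\<^sup>2 \<le> (r^N / (1 - r))\<^sup>2" by (intro power_mono) (simp_all add: nu_nonneg)
  qed
  finally show ?thesis .
qed

lemma S_cauchy:
  assumes "nhds0_set V"
  shows "\<exists>N. \<forall>m\<ge>N. \<forall>n\<ge>N. gram (S m h - S n h) (S m h - S n h) \<in> V"
proof -
  from assms obtain W where W: "open W" "0 \<in> W" "W \<subseteq> V" unfolding nhds0_set_def by blast
  from solid_base[OF W(1,2)] obtain V' where V': "nhds0_set V'" "V' \<subseteq> W" "solid_set Zp V'" by blast
  from V'(1) obtain W' where W': "open W'" "0 \<in> W'" "W' \<subseteq> V'" unfolding nhds0_set_def by blast
  have "(\<lambda>n. rs ((r^n / (1 - r))\<^sup>2) (gram h h)) \<longlonglongrightarrow> 0" by (rule rs_tendsto0[OF tail_tendsto])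
  from topological_tendstoD[OF this W'(1,2)] obtain N where
    "\<forall>n\<ge>N. rs ((r^n / (1 - r))\<^sup>2) (gram h h) \<in> W'" unfolding eventually_sequentially by blast
  then have N: "rs ((r^N / (1 - r))\<^sup>2) (gram h h) \<in> V'" using W' by blast
  have *: "gram (S m h - S n h) (S m h - S n h) \<in> V'" if "n \<le> m" "N \<le> n" for m n
    using V'(3) S_diff_bd[OF that, of h] N gram_pos unfolding solid_set_def le_def by blast
  have "gram (S m h - S n h) (S m h - S n h) \<in> V" if "m \<ge> N" "n \<ge> N" for m n
  proof (cases "n \<le> m")
    case True then show ?thesis using * that V' W by blast
  next
    case False
    then have "gram (S n h - S m h) (S n h - S m h) \<in> V'" using * that by simp
    moreover have "S m h - S n h = - (S n h - S m h)" by simp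
    ultimately show ?thesis using V' W by (simp only: gram_neg) blast
  qed
  then show ?thesis by blast
qed

definition R :: "'h \<Rightarrow> 'h" where "R h = (SOME a. hconv (\<lambda>N. S N h) a)"

lemma R_conv: "hconv (\<lambda>N. S N h) (R h)"
  unfolding R_def using hcomplete[OF S_cauchy] by (rule someI_ex)

lemma R_add: "R (x + y) = R x + R y"
proof -
  have "hconv (\<lambda>N. S N x + S N y) (R x + R y)" by (intro hconv_add R_conv)
  then have "hconv (\<lambda>N. S N (x + y)) (R x + R y)" by (simp add: S_def peval_lin_add)
  then show ?thesis using R_conv hconv_unique by blast
qed

lemma R_smul: "R (smulH c x) = smulH c (R x)"
proof -
  have "hconv (\<lambda>N. smulH c (S N x)) (smulH c (R x))"
    by (rule hconv_op[OF _ _ R_conv, where C="(cmod c)\<^sup>2"]) (simp_all add: gram_smul_smul le_refl H.scale_right_diff_distrib)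
  then have "hconv (\<lambda>N. S N (smulH c x)) (smulH c (R x))" by (simp add: S_def peval_lin_smul)
  then show ?thesis using R_conv hconv_unique by blast
qed

lemma R_comm:
  assumes "\<And>x y. L (x + y) = L x + L y" "\<And>c x. L (smulH c x) = smulH c (L x)" "\<And>x. L (X x) = X (L x)"
    and "\<And>y. le (gram (L y) (L y)) (rs C (gram y y))"
  shows "R (L h) = L (R h)"
proof -
  have D: "L (u - v) = L u - L v" for u v
    using assms(1)[of "u - v" v] by (simp add: algebra_simps)
  have "hconv (\<lambda>N. L (S N h)) (L (R h))" by (rule hconv_op[OF assms(4) D R_conv])
  then have "hconv (\<lambda>N. S N (L h)) (L (R h))" unfolding S_def using peval_comm[OF assms(1-3)] by simp
  then show ?thesis using R_conv hconv_unique by blast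
qed

lemma R_sa: "gram (R h) k = gram h (R k)"
proof -
  have a: "(\<lambda>N. gram (S N h) k) \<longlonglongrightarrow> gram (R h) k" by (rule gram_cont1[OF R_conv])
  have b: "(\<lambda>N. gram h (S N k)) \<longlonglongrightarrow> gram h (R k)" by (rule gram_cont2[OF R_conv])
  have "(\<lambda>N. gram (S N h) k) = (\<lambda>N. gram h (S N k))" unfolding S_def by (simp add: peval_sa)
  with a b show ?thesis using LIMSEQ_unique by metis
qed

lemma peval_lin_diff: "peval p (x - y) = peval p x - peval p y"
  using peval_lin_add[of p "x - y" y] by (simp add: algebra_simps)

lemma R_Y_R: "R (peval Yp (R h)) = h"
proof -
  define y where "y = R h"
  define K where "K = (1 + r) / (1 - r)"
  have Kn: "nu (sp N * Yp) \<le> K" for N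
  proof -
    have "nu (sp N * Yp) \<le> (1 + r) * nu (sp N)" by (rule nu_Y)
    also have "\<dots> \<le> (1 + r) * (1 / (1 - r))" using nu_sp r0 by (intro mult_left_mono) simp_all
    finally show ?thesis unfolding K_def by simp
  qed
  have c1: "hconv (\<lambda>N. peval (sp N * Yp) (y - S N h)) 0"
  proof (rule squeezeH[where w="\<lambda>N. rs (K\<^sup>2) (gram (S N h - y) (S N h - y))"])
    fix N
    have "le (gram (peval (sp N * Yp) (y - S N h)) (peval (sp N * Yp) (y - S N h)))
             (rs ((nu (sp N * Yp))\<^sup>2) (gram (y - S N h) (y - S N h)))" by (rule peval_bd)
    also have "le \<dots> (rs (K\<^sup>2) (gram (y - S N h) (y - S N h)))"
      by (rule le_scale2[OF gram_pos]) (intro power_mono Kn nu_nonneg)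
    finally have L: "le (gram (peval (sp N * Yp) (y - S N h)) (peval (sp N * Yp) (y - S N h)))
       (rs (K\<^sup>2) (gram (y - S N h) (y - S N h)))" .
    have e: "gram (y - S N h) (y - S N h) = gram (S N h - y) (S N h - y)"
      using gram_neg[of "S N h - y"] by simp
    show "le (gram (peval (sp N * Yp) (y - S N h) - 0) (peval (sp N * Yp) (y - S N h) - 0))
       (rs (K\<^sup>2) (gram (S N h - y) (S N h - y)))" unfolding diff_zero e[symmetric] by (rule L)
  next
    have "(\<lambda>N. gram (S N h - y) (S N h - y)) \<longlonglongrightarrow> 0" using R_conv[of h] unfolding y_def hconv_def .
    from tendsto_smulZc[OF this] show "(\<lambda>N. rs (K\<^sup>2) (gram (S N h - y) (S N h - y))) \<longlonglongrightarrow> 0" by simp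
  qed
  have c2: "hconv (\<lambda>N. peval (sp N * Yp * sp N - 1) h) 0"
  proof (rule hconv0_bd)
    fix N
    have "le (gram (peval (sp N * Yp * sp N - 1) h) (peval (sp N * Yp * sp N - 1) h))
            (rs ((nu (sp N * Yp * sp N - 1))\<^sup>2) (gram h h))" by (rule peval_bd)
    also have "le \<dots> (rs (((1 + r) * (r^N / (1 - r)) + r^N)\<^sup>2) (gram h h))"
      by (rule le_scale2[OF gram_pos]) (intro power_mono nu_e nu_nonneg)
    finally show "le (gram (peval (sp N * Yp * sp N - 1) h) (peval (sp N * Yp * sp N - 1) h))
            (rs (((1 + r) * (r^N / (1 - r)) + r^N)\<^sup>2) (gram h h))" .
  next
    have "(\<lambda>N. ((1 + r) * (r^N / (1 - r)) + r^N)\<^sup>2) \<longlonglongrightarrow> ((1 + r) * 0 + 0)\<^sup>2"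
      by (rule tendsto_power[OF tendsto_add[OF tendsto_mult[OF tendsto_const tail0] pow0]])
    then show "(\<lambda>N. ((1 + r) * (r^N / (1 - r)) + r^N)\<^sup>2) \<longlonglongrightarrow> 0" by simp
  qed
  have "hconv (\<lambda>N. h + (peval (sp N * Yp) (y - S N h) + peval (sp N * Yp * sp N - 1) h)) (h + (0 + 0))"
    by (intro hconv_add hconv_const c1 c2)
  moreover have "h + (peval (sp N * Yp) (y - S N h) + peval (sp N * Yp * sp N - 1) h) = S N (peval Yp y)" for N
    unfolding S_def peval_lin_diff peval_diff peval_one peval_mult[symmetric] by (simp add: mult.assoc)
  ultimately have "hconv (\<lambda>N. S N (peval Yp y)) h" by simp
  then show ?thesis using R_conv hconv_unique unfolding y_def by blast
qed

lemma Y_eq: "peval Yp h = h - X h"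
proof -
  have "X (- h) = - X h" using X_add[of h "-h"] X_zero by (simp add: add_eq_0_iff)
  then show ?thesis unfolding Yp_def by (simp add: peval_pCons peval_const peval_zero X_smul X_zero)
qed

lemma R_X: "R (X h) = X (R h)"
  by (rule R_comm[OF X_add X_smul refl X_bd])

lemma R_Y: "R (peval Yp h) = peval Yp (R h)"
  by (rule R_comm[OF peval_lin_add peval_lin_smul peval_X peval_bd])

end



context loynes_space
begin

lemma vsH: "vector_space smulH"
  unfolding vector_space_def using H.vector_space_assms by auto

lemma lin_iff: "Vector_Spaces.linear smulH smulH L \<longleftrightarrow> (\<forall>x y. L (x + y) = L x + L y) \<and> (\<forall>c x. L (smulH c x) = smulH c (L x))"
  using Vector_Spaces.linear_iff[of smulH smulH L] vsH by auto

lemma adjoint_unique: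
  assumes "is_adjoint smulH gram T S1" "is_adjoint smulH gram T S2" shows "S1 = S2"
proof
  fix k
  have "gram h (S1 k - S2 k) = 0" for h
    using assms unfolding is_adjoint_def by (simp add: gram_diff2)
  then have "gram (S1 k - S2 k) (S1 k - S2 k) = 0" by blast
  then show "S1 k = S2 k" using gram_eq0 by simp
qed

lemma proj_facts:
  assumes "gram_sa_projection smulZ Zp smulH gram P"
  shows "\<And>x y. P (x + y) = P x + P y" "\<And>c x. P (smulH c x) = smulH c (P x)"
    "\<And>x y. gram (P x) y = gram x (P y)" "\<And>x. P (P x) = P x"
    "\<exists>M. \<forall>y. le (gram (P y) (P y)) (rs (M\<^sup>2) (gram y y))"
proof -
  from assms have L: "Vector_Spaces.linear smulH smulH P" and B: "\<exists>M. bounded_by smulZ Zp gram P M"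
    and E: "\<exists>S. is_adjoint smulH gram P S" and A: "adjoint smulH gram P = P" and PP: "P \<circ> P = P"
    unfolding gram_sa_projection_def Bstar_def Bops_def by auto
  from E have "is_adjoint smulH gram P (adjoint smulH gram P)" unfolding adjoint_def by (rule someI_ex)
  then have adj: "is_adjoint smulH gram P P" using A by simp
  show "\<And>x y. P (x + y) = P x + P y" "\<And>c x. P (smulH c x) = smulH c (P x)" using L lin_iff by auto
  show "\<And>x y. gram (P x) y = gram x (P y)" using adj unfolding is_adjoint_def by auto
  show "\<And>x. P (P x) = P x" using PP by (metis comp_apply)
  show "\<exists>M. \<forall>y. le (gram (P y) (P y)) (rs (M\<^sup>2) (gram y y))" using B unfolding bounded_by_def le_def by auto
qed


lemma main:
  assumes aP: "gram_sa_projection smulZ Zp smulH gram P" and aQ: "gram_sa_projection smulZ Zp smulH gram Q"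
    and nrm: "op_norm smulZ Zp gram (\<lambda>h. P h - Q h) < 1"
  shows "\<exists>T. T \<in> PI smulH gram \<and> T \<in> Bstar smulZ Zp smulH gram
            \<and> P = adjoint smulH gram T \<circ> T \<and> Q = T \<circ> adjoint smulH gram T"
proof -
  note Pf = proj_facts[OF aP] and Qf = proj_facts[OF aQ]
  have P_add: "P (x + y) = P x + P y" and P_smul: "P (smulH c x) = smulH c (P x)"
    and P_sa: "gram (P x) y = gram x (P y)" and PP: "P (P x) = P x" for x y c using Pf by auto
  have Q_add: "Q (x + y) = Q x + Q y" and Q_smul: "Q (smulH c x) = smulH c (Q x)"
    and Q_sa: "gram (Q x) y = gram x (Q y)" and QQ: "Q (Q x) = Q x" for x y c using Qf by auto
  obtain MP where MP: "\<And>y. le (gram (P y) (P y)) (rs (MP\<^sup>2) (gram y y))" using Pf(5) by blast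
  obtain MQ where MQ: "\<And>y. le (gram (Q y) (Q y)) (rs (MQ\<^sup>2) (gram y y))" using Qf(5) by blast
  have P_diff: "P (x - y) = P x - P y" for x y using P_add[of "x - y" y] by (simp add: algebra_simps)
  have Q_diff: "Q (x - y) = Q x - Q y" for x y using Q_add[of "x - y" y] by (simp add: algebra_simps)
  have P0: "P 0 = 0" using P_add[of 0 0] by simp
  have Q0: "Q 0 = 0" using Q_add[of 0 0] by simp
  define A where "A h = P h - Q h" for h
  define M0 where "M0 = sqrt (2 * MP\<^sup>2 + 2 * MQ\<^sup>2 + 1)"
  have M0pos: "M0 > 0" unfolding M0_def by (intro real_sqrt_gt_zero) (simp add: add_nonneg_pos)
  have M0sq: "M0\<^sup>2 = 2 * MP\<^sup>2 + 2 * MQ\<^sup>2 + 1" unfolding M0_def by (simp add: add_nonneg_pos)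
  have "bounded_by smulZ Zp gram A M0"
    unfolding bounded_by_def
  proof (intro conjI allI M0pos)
    fix h
    have "le (gram (P h + (- Q h)) (P h + (- Q h))) (rs 2 (gram (P h) (P h)) + rs 2 (gram (- Q h) (- Q h)))"
      by (rule gram_le2)
    also have "le \<dots> (rs 2 (rs (MP\<^sup>2) (gram h h)) + rs 2 (rs (MQ\<^sup>2) (gram h h)))"
      unfolding gram_neg by (intro le_add le_scale MP MQ) simp_all
    also have "rs 2 (rs (MP\<^sup>2) (gram h h)) + rs 2 (rs (MQ\<^sup>2) (gram h h)) = rs (2 * MP\<^sup>2 + 2 * MQ\<^sup>2) (gram h h)"
      by (simp only: rs_rs of_real_add scale_left_distrib)
    also have "le \<dots> (rs (M0\<^sup>2) (gram h h))" unfolding M0sq by (rule le_scale2[OF gram_pos]) simp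
    finally show "rs (M0\<^sup>2) (gram h h) - gram (A h) (A h) \<in> Zp" unfolding le_def A_def by simp
  qed
  then have ne: "{M. bounded_by smulZ Zp gram A M} \<noteq> {}" by blast
  have "Inf {M. bounded_by smulZ Zp gram A M} < 1" using nrm unfolding op_norm_def A_def by simp
  from cInf_lessD[OF ne this] obtain M where M: "bounded_by smulZ Zp gram A M" "M < 1" by blast
  then have Mpos: "M > 0" and MA: "\<And>h. le (gram (A h) (A h)) (rs (M\<^sup>2) (gram h h))"
    unfolding bounded_by_def le_def by auto
  define X where "X h = A (A h)" for h
  define r where "r = M\<^sup>2"
  have A_add: "A (x + y) = A x + A y" for x y unfolding A_def by (simp add: P_add Q_add)
  have A_smul: "A (smulH c x) = smulH c (A x)" for c x unfolding A_def by (simp add: P_smul Q_smul H.scale_right_diff_distrib)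
  have A_sa: "gram (A x) y = gram x (A y)" for x y unfolding A_def by (simp add: gram_diff1 gram_diff2 P_sa Q_sa)
  interpret opX smulZ invZ Zp smulH gram X r
  proof unfold_locales
    show "X (x + y) = X x + X y" for x y unfolding X_def by (simp add: A_add)
    show "X (smulH c x) = smulH c (X x)" for c x unfolding X_def by (simp add: A_smul)
    show "gram (X x) y = gram x (X y)" for x y unfolding X_def by (simp add: A_sa)
    show "le (gram (X x) (X x)) (rs (r\<^sup>2) (gram x x))" for x
    proof -
      have "le (gram (X x) (X x)) (rs (M\<^sup>2) (gram (A x) (A x)))" unfolding X_def by (rule MA)
      also have "le \<dots> (rs (M\<^sup>2) (rs (M\<^sup>2) (gram x x)))" by (rule le_scale[OF MA]) simp
      also have "rs (M\<^sup>2) (rs (M\<^sup>2) (gram x x)) = rs (r\<^sup>2) (gram x x)" unfolding r_def by (simp only: rs_rs power2_eq_square)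
      finally show ?thesis .
    qed
    show "0 \<le> r" unfolding r_def by simp
    show "r < 1" unfolding r_def using Mpos M(2) by (simp add: power_less_one_iff abs_less_iff power2_less_eq_zero_iff)
  qed
  have XP: "X (P h) = P h - P (Q (P h))" for h unfolding X_def A_def by (simp add: P_diff Q_diff PP QQ)
  have PX: "P (X h) = P h - P (Q (P h))" for h unfolding X_def A_def by (simp add: P_diff Q_diff PP QQ)
  have XQ: "X (Q h) = Q h - Q (P (Q h))" for h unfolding X_def A_def by (simp add: P_diff Q_diff PP QQ)
  have QX: "Q (X h) = Q h - Q (P (Q h))" for h unfolding X_def A_def by (simp add: P_diff Q_diff PP QQ)
  have RP: "R (P h) = P (R h)" for h by (rule R_comm[OF P_add P_smul _ MP]) (simp add: XP PX)
  have RQ: "R (Q h) = Q (R h)" for h by (rule R_comm[OF Q_add Q_smul _ MQ]) (simp add: XQ QX)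
  have PQP: "P (Q (P h)) = peval Yp (P h)" for h using XP[of h] by (simp add: Y_eq)
  have QPQ: "Q (P (Q h)) = peval Yp (Q h)" for h using XQ[of h] by (simp add: Y_eq)
  have YQ: "peval Yp (Q h) = Q (peval Yp h)" for h by (simp add: Y_eq Q_diff XQ QX)
  define T where "T h = Q (P (R h))" for h
  define Ts where "Ts h = R (P (Q h))" for h
  have R0: "R 0 = 0" using R_add[of 0 0] by simp
  have T_lin: "Vector_Spaces.linear smulH smulH T" unfolding lin_iff T_def by (simp add: R_add R_smul P_add P_smul Q_add Q_smul)
  have Ts_lin: "Vector_Spaces.linear smulH smulH Ts" unfolding lin_iff Ts_def by (simp add: R_add R_smul P_add P_smul Q_add Q_smul)
  have T_adj: "is_adjoint smulH gram T Ts"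
    unfolding is_adjoint_def using Ts_lin by (simp add: T_def Ts_def Q_sa P_sa R_sa)
  have adjT: "adjoint smulH gram T = Ts"
    unfolding adjoint_def by (rule some_equality[where P="is_adjoint smulH gram T", OF T_adj]) (rule adjoint_unique[OF _ T_adj])
  have TsT: "Ts (T h) = P h" for h
  proof -
    have "Ts (T h) = R (P (Q (P (R h))))" unfolding T_def Ts_def by (simp add: QQ)
    also have "\<dots> = R (peval Yp (R (P h)))" by (simp add: PQP RP)
    also have "\<dots> = P h" by (rule R_Y_R)
    finally show ?thesis .
  qed
  have TTs: "T (Ts h) = Q h" for h
  proof -
    have "T (Ts h) = Q (P (R (R (P (Q h)))))" unfolding T_def Ts_def ..
    also have "\<dots> = Q (P (Q (R (R h))))" by (simp add: RP RQ PP)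
    also have "\<dots> = Q (peval Yp (R (R h)))" by (simp add: QPQ YQ QQ)
    also have "peval Yp (R (R h)) = h" using R_Y[of "R h"] R_Y_R[of h] by simp
    finally show ?thesis .
  qed
  have ker: "{h. T h = 0} = {h. P h = 0}"
  proof (intro Collect_cong iffI)
    fix h assume "T h = 0"
    then have "Ts (T h) = 0" unfolding Ts_def by (simp add: Q0 P0 R0)
    then show "P h = 0" using TsT by simp
  next
    fix h assume "P h = 0"
    then show "T h = 0" unfolding T_def by (simp add: RP[symmetric] R0 P0 Q0)
  qed
  have QT: "Q (T h) = T h" for h unfolding T_def by (simp add: QQ)
  have gh: "gram h h - gram (T h) (T h) = gram (h - P h) (h - P h)" for h
  proof -
    have "gram (T h) (T h) = gram (P h) h" using T_adj TsT unfolding is_adjoint_def by (simp add: P_sa)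
    moreover have "gram (h - P h) (P h) = 0" by (simp add: gram_diff1 P_sa PP)
    ultimately show ?thesis by (simp add: gram_diff1 gram_diff2 P_sa PP)
  qed
  have bT: "bounded_by smulZ Zp gram T 1" unfolding bounded_by_def using gh gram_pos by simp
  have TB: "T \<in> Bstar smulZ Zp smulH gram"
    unfolding Bstar_def Bops_def using T_lin bT T_adj by blast
  have acc_ker: "accessible smulH gram {h. T h = 0}"
    unfolding accessible_def ker
  proof (intro conjI allI)
    show "H.subspace {h. P h = 0}" unfolding H.subspace_def by (simp add: P0 P_add P_smul)
    fix h
    have "h - P h \<in> {h. P h = 0}" by (simp add: P_diff PP)
    moreover have "P h \<in> gram_orth gram {h. P h = 0}" unfolding gram_orth_def by (simp add: P_sa)
    moreover have "h = (h - P h) + P h" by simp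
    ultimately show "\<exists>m\<in>{h. P h = 0}. \<exists>n\<in>gram_orth gram {h. P h = 0}. h = m + n" by blast
  qed
  have acc_ran: "accessible smulH gram (range T)"
    unfolding accessible_def
  proof (intro conjI allI)
    show "H.subspace (range T)" unfolding H.subspace_def
    proof (intro conjI ballI allI)
      have T_add: "T (a + b) = T a + T b" and T_smul: "T (smulH c a) = smulH c (T a)" for a b c
        using T_lin unfolding lin_iff by auto
      have "T 0 = 0" using T_add[of 0 0] by simp
      then show "0 \<in> range T" by (metis rangeI)
      fix x y assume "x \<in> range T" "y \<in> range T"
      then obtain a b where "x = T a" "y = T b" by blast
      then have "x + y = T (a + b)" using T_add by simp
      then show "x + y \<in> range T" by simp
    next
      have T_smul: "T (smulH c a) = smulH c (T a)" for a c
        using T_lin unfolding lin_iff by auto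
      fix c x assume "x \<in> range T"
      then obtain a where "x = T a" by blast
      then have "smulH c x = T (smulH c a)" using T_smul by simp
      then show "smulH c x \<in> range T" by simp
    qed
    fix h
    have "Q h \<in> range T" using TTs by (metis rangeI)
    moreover have "h - Q h \<in> gram_orth gram (range T)"
      unfolding gram_orth_def
    proof (intro CollectI ballI)
      fix m assume "m \<in> range T"
      then obtain k where "m = T k" by blast
      then have "m = Q m" using QT by simp
      then show "gram (h - Q h) m = 0" by (metis gram_diff1 Q_sa QQ diff_self)
    qed
    moreover have "h = Q h + (h - Q h)" by simp
    ultimately show "\<exists>m\<in>range T. \<exists>n\<in>gram_orth gram (range T). h = m + n" by blast
  qed
  have iso: "gram (T h) (T k) = gram h k" if "h \<in> gram_orth gram {h. T h = 0}" "k \<in> gram_orth gram {h. T h = 0}" for h k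
  proof -
    have "h - P h \<in> {h. T h = 0}" unfolding ker by (simp add: P_diff PP)
    then have "gram k (h - P h) = 0" using that(2) unfolding gram_orth_def by blast
    then have "gram (h - P h) k = 0" using gram_sym[of k "h - P h"] by simp
    then have "gram h k = gram (P h) k" by (simp add: gram_diff1)
    moreover have "gram (T h) (T k) = gram (P h) k" using T_adj TsT unfolding is_adjoint_def by (simp add: P_sa)
    ultimately show ?thesis by simp
  qed
  have TPI: "T \<in> PI smulH gram" unfolding PI_def using T_lin acc_ker acc_ran iso by blast
  have "P = adjoint smulH gram T \<circ> T" unfolding adjT by (rule ext) (simp add: TsT)
  moreover have "Q = T \<circ> adjoint smulH gram T" unfolding adjT by (rule ext) (simp add: TTs)
  ultimately show ?thesis using TPI TB by blast
qed

end


theorem theorem2p1: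
  fixes smulZ :: "complex \<Rightarrow> 'z::{t2_space,ab_group_add} \<Rightarrow> 'z"
    and invZ :: "'z \<Rightarrow> 'z" and Zp :: "'z set"
    and smulH :: "complex \<Rightarrow> 'h::ab_group_add \<Rightarrow> 'h"
    and gram :: "'h \<Rightarrow> 'h \<Rightarrow> 'z"
    and P Q :: "'h \<Rightarrow> 'h"
  assumes "loynes_space smulZ invZ Zp smulH gram"
    and "gram_sa_projection smulZ Zp smulH gram P"
    and "gram_sa_projection smulZ Zp smulH gram Q"
    and "op_norm smulZ Zp gram (\<lambda>h. P h - Q h) < 1"
  shows "\<exists>T. T \<in> PI smulH gram \<and> T \<in> Bstar smulZ Zp smulH gram
            \<and> P = adjoint smulH gram T \<circ> T \<and> Q = T \<circ> adjoint smulH gram T"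
proof -
  interpret loynes_space smulZ invZ Zp smulH gram by (rule assms(1))
  show ?thesis by (rule main[OF assms(2-4)])
qed

end
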